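(* Let $G$ be a finite group and $p$ a prime dividing $|G|$. Let $S^{\min}_{G/G}$ be the smallest covering sieve on $G/G$ for the sipp topology on $\mathcal{O}(G)$, viewed as a presheaf of sets on $\mathcal{O}(G)$. Then its restriction to $\mathcal{O}_p(G)$ is a terminal object of $\mathrm{PSh}(\mathcal{O}_p(G))$, and its restriction to $\mathcal{O}^{\circ}_p(G)$ is a terminal object of $\mathrm{PSh}(\mathcal{O}^{\circ}_p(G))$.
   Context: $\mathcal{O}(G)$ is the category of orbits $G/H$ and $G$-maps; $\mathcal{O}_p(G)$ (resp. $\mathcal{O}^{\circ}_p(G)$) its full subcategory on $G/Q$ with $Q$ a $p$-subgroup (resp. non-trivial $p$-subgroup). A sieve on $x$ is a set of morphisms with codomain $x$ closed under precomposition, equivalently a subfunctor of $\mathrm{Hom}(-,x)$. The sipp topology: a sieve on $G/H$ is covering iff it contains the projection $G/P_H\to G/H$ for a Sylow $p$-subgroup $P_H$ of $H$. $\mathrm{PSh}$ denotes presheaves of sets. *)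

theory Defs
  imports "HOL-Algebra.Coset" "HOL-Library.FuncSet" "HOL-Computational_Algebra.Primes"
begin

text \<open>A (small) category given by its object set, hom-sets, composition
  (Comp g f = g after f) and identities.\<close>
record ('o, 'm) cat =
  Ob   :: "'o set"
  Hom  :: "'o \<Rightarrow> 'o \<Rightarrow> 'm set"
  Comp :: "'m \<Rightarrow> 'm \<Rightarrow> 'm"
  Idm  :: "'o \<Rightarrow> 'm"

definition presheaf :: "('o, 'm) cat \<Rightarrow> ('o \<Rightarrow> 'x set) \<Rightarrow> ('m \<Rightarrow> 'x \<Rightarrow> 'x) \<Rightarrow> bool" where
  "presheaf C F0 F1 \<longleftrightarrow>
     (\<forall>a\<in>Ob C. \<forall>b\<in>Ob C. \<forall>f\<in>Hom C a b. F1 f \<in> F0 b \<rightarrow> F0 a) \<and>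
     (\<forall>a\<in>Ob C. \<forall>x\<in>F0 a. F1 (Idm C a) x = x) \<and>
     (\<forall>a\<in>Ob C. \<forall>b\<in>Ob C. \<forall>c\<in>Ob C. \<forall>f\<in>Hom C a b. \<forall>g\<in>Hom C b c. \<forall>x\<in>F0 c.
        F1 (Comp C g f) x = F1 f (F1 g x))"

definition nat_trans ::
  "('o, 'm) cat \<Rightarrow> ('o \<Rightarrow> 'x set) \<Rightarrow> ('m \<Rightarrow> 'x \<Rightarrow> 'x) \<Rightarrow>
   ('o \<Rightarrow> 'y set) \<Rightarrow> ('m \<Rightarrow> 'y \<Rightarrow> 'y) \<Rightarrow> ('o \<Rightarrow> 'x \<Rightarrow> 'y) \<Rightarrow> bool" where
  "nat_trans C X0 X1 Y0 Y1 \<eta> \<longleftrightarrow>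
     (\<forall>a\<in>Ob C. \<eta> a \<in> X0 a \<rightarrow> Y0 a) \<and>
     (\<forall>a\<in>Ob C. \<forall>b\<in>Ob C. \<forall>f\<in>Hom C a b. \<forall>x\<in>X0 b. \<eta> a (X1 f x) = Y1 f (\<eta> b x))"

definition psh_terminal ::
  "'x itself \<Rightarrow> ('o, 'm) cat \<Rightarrow> ('o \<Rightarrow> 't set) \<Rightarrow> ('m \<Rightarrow> 't \<Rightarrow> 't) \<Rightarrow> bool" where
  "psh_terminal _ C T0 T1 \<longleftrightarrow> presheaf C T0 T1 \<and>
     (\<forall>(X0 :: 'o \<Rightarrow> 'x set) X1. presheaf C X0 X1 \<longrightarrow>
        (\<exists>\<eta>. nat_trans C X0 X1 T0 T1 \<eta>) \<and>
        (\<forall>\<eta> \<eta>'. nat_trans C X0 X1 T0 T1 \<eta> \<and> nat_trans C X0 X1 T0 T1 \<eta>' \<longrightarrow>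
            (\<forall>a\<in>Ob C. \<forall>x\<in>X0 a. \<eta> a x = \<eta>' a x)))"

definition lcosets :: "('a, 'b) monoid_scheme \<Rightarrow> 'a set \<Rightarrow> 'a set set" where
  "lcosets G H = (\<Union>a\<in>carrier G. {a <#\<^bsub>G\<^esub> H})"

definition G_map :: "('a, 'b) monoid_scheme \<Rightarrow> 'a set \<Rightarrow> 'a set \<Rightarrow> ('a set \<Rightarrow> 'a set) \<Rightarrow> bool" where
  "G_map G H K f \<longleftrightarrow> f \<in> extensional (lcosets G H) \<and>
     (\<forall>C\<in>lcosets G H. f C \<in> lcosets G K) \<and>
     (\<forall>g\<in>carrier G. \<forall>C\<in>lcosets G H. f (g <#\<^bsub>G\<^esub> C) = g <#\<^bsub>G\<^esub> f C)"

type_synonym 'a orb_mor = "'a set \<times> 'a set \<times> ('a set \<Rightarrow> 'a set)"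

text \<open>A morphism G/H \<rightarrow> G/K is a triple (H, K, f) with f a G-map.\<close>
definition mdom :: "'a orb_mor \<Rightarrow> 'a set" where "mdom m = fst m"
definition mcod :: "'a orb_mor \<Rightarrow> 'a set" where "mcod m = fst (snd m)"

definition orbit_cat_on :: "('a, 'b) monoid_scheme \<Rightarrow> 'a set set \<Rightarrow> ('a set, 'a orb_mor) cat" where
  "orbit_cat_on G Obs =
     \<lparr> Ob = Obs,
       Hom = (\<lambda>H K. {(H, K, f) | f. G_map G H K f}),
       Comp = (\<lambda>(K', L, g) (H, K, f). (H, L, restrict (g \<circ> f) (lcosets G H))),
       Idm = (\<lambda>H. (H, H, restrict id (lcosets G H))) \<rparr>"

definition orbit_cat :: "('a, 'b) monoid_scheme \<Rightarrow> ('a set, 'a orb_mor) cat" where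
  "orbit_cat G = orbit_cat_on G {H. subgroup H G}"

definition p_subgroup :: "('a, 'b) monoid_scheme \<Rightarrow> nat \<Rightarrow> 'a set \<Rightarrow> bool" where
  "p_subgroup G p Q \<longleftrightarrow> subgroup Q G \<and> (\<exists>k. card Q = p ^ k)"

definition orbit_cat_p :: "('a, 'b) monoid_scheme \<Rightarrow> nat \<Rightarrow> ('a set, 'a orb_mor) cat" where
  "orbit_cat_p G p = orbit_cat_on G {Q. p_subgroup G p Q}"

definition orbit_cat_p_circ :: "('a, 'b) monoid_scheme \<Rightarrow> nat \<Rightarrow> ('a set, 'a orb_mor) cat" where
  "orbit_cat_p_circ G p = orbit_cat_on G {Q. p_subgroup G p Q \<and> Q \<noteq> {\<one>\<^bsub>G\<^esub>}}"

definition sieve :: "('o, 'm) cat \<Rightarrow> 'o \<Rightarrow> 'm set \<Rightarrow> bool" where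
  "sieve C x S \<longleftrightarrow>
     S \<subseteq> (\<Union>y\<in>Ob C. Hom C y x) \<and>
     (\<forall>y\<in>Ob C. \<forall>z\<in>Ob C. \<forall>f\<in>Hom C y x. \<forall>\<phi>\<in>Hom C z y. f \<in> S \<longrightarrow> Comp C f \<phi> \<in> S)"

definition sylow_subgroup_of :: "('a, 'b) monoid_scheme \<Rightarrow> nat \<Rightarrow> 'a set \<Rightarrow> 'a set \<Rightarrow> bool" where
  "sylow_subgroup_of G p H P \<longleftrightarrow>
     subgroup P G \<and> P \<subseteq> H \<and> card P = p ^ multiplicity p (card H)"

definition orb_proj :: "('a, 'b) monoid_scheme \<Rightarrow> 'a set \<Rightarrow> 'a set \<Rightarrow> 'a orb_mor" where
  "orb_proj G P H = (P, H, restrict (\<lambda>C. C <#>\<^bsub>G\<^esub> H) (lcosets G P))"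

definition sipp_covering :: "('a, 'b) monoid_scheme \<Rightarrow> nat \<Rightarrow> 'a set \<Rightarrow> 'a orb_mor set \<Rightarrow> bool" where
  "sipp_covering G p H S \<longleftrightarrow> sieve (orbit_cat G) H S \<and>
     (\<exists>P. sylow_subgroup_of G p H P \<and> orb_proj G P H \<in> S)"

definition min_sipp_sieve :: "('a, 'b) monoid_scheme \<Rightarrow> nat \<Rightarrow> 'a set \<Rightarrow> 'a orb_mor set" where
  "min_sipp_sieve G p H =
     (THE S. sipp_covering G p H S \<and> (\<forall>S'. sipp_covering G p H S' \<longrightarrow> S \<subseteq> S'))"

definition sieve_psh0 :: "('o, 'm) cat \<Rightarrow> 'o \<Rightarrow> 'm set \<Rightarrow> 'o \<Rightarrow> 'm set" where
  "sieve_psh0 C x S = (\<lambda>a. S \<inter> Hom C a x)"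

definition sieve_psh1 :: "('o, 'm) cat \<Rightarrow> 'm \<Rightarrow> 'm \<Rightarrow> 'm" where
  "sieve_psh1 C = (\<lambda>\<phi> f. Comp C f \<phi>)"

end

theory Submission imports Defs "HOL-Algebra.Group_Action" "HOL-Algebra.Sylow"
begin

context group
begin

lemma lcosetsI: "subgroup H G \<Longrightarrow> a \<in> carrier G \<Longrightarrow> a <# H \<in> lcosets G H"
  unfolding lcosets_def by blast

lemma lcosetsE: "C \<in> lcosets G H \<Longrightarrow> (\<And>a. a \<in> carrier G \<Longrightarrow> C = a <# H \<Longrightarrow> P) \<Longrightarrow> P"
  unfolding lcosets_def by blast

lemma lcosets_sub: "subgroup H G \<Longrightarrow> C \<in> lcosets G H \<Longrightarrow> C \<subseteq> carrier G"
  by (erule lcosetsE) (simp add: l_coset_subset_G subgroup.subset)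

lemma lcosets_mult: "subgroup H G \<Longrightarrow> C \<in> lcosets G H \<Longrightarrow> g \<in> carrier G \<Longrightarrow> g <# C \<in> lcosets G H"
proof -
  assume H: "subgroup H G" and C: "C \<in> lcosets G H" and g: "g \<in> carrier G"
  from C obtain a where a: "a \<in> carrier G" "C = a <# H" by (rule lcosetsE)
  have "g <# C = (g \<otimes> a) <# H" using a g lcos_m_assoc[OF subgroup.subset[OF H] g a(1)] by simp
  then show ?thesis using lcosetsI[OF H m_closed[OF g a(1)]] by simp
qed

lemma carrier_lcoset: "C \<in> lcosets G (carrier G) \<Longrightarrow> C = carrier G"
  by (metis lcosetsE coset_join3 subgroup_self)

lemma lcosets_carrier: "lcosets G (carrier G) = {carrier G}"
  using carrier_lcoset lcosetsI[OF subgroup_self one_closed] lcos_mult_one[of "carrier G"] by auto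

lemma lcoset_setmult_carrier: "subgroup H G \<Longrightarrow> C \<in> lcosets G H \<Longrightarrow> C <#> carrier G = carrier G"
proof -
  assume H: "subgroup H G" and C: "C \<in> lcosets G H"
  from C obtain a where a: "a \<in> carrier G" "C = a <# H" by (rule lcosetsE)
  have "H <#> carrier G = carrier G"
  proof
    show "H <#> carrier G \<subseteq> carrier G" using subgroup.mem_carrier[OF H] by (auto simp: set_mult_def)
    show "carrier G \<subseteq> H <#> carrier G"
    proof
      fix x assume x: "x \<in> carrier G"
      then have "x = \<one> \<otimes> x" by simp
      then show "x \<in> H <#> carrier G" using subgroup.one_closed[OF H] x unfolding set_mult_def by blast
    qed
  qed
  then show ?thesis using a H by (simp add: setmult_lcos_assoc subgroup.subset coset_join3[OF _ subgroup_self])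
qed

lemma set_inv_lcoset:
  assumes H: "subgroup H G" and a: "a \<in> carrier G"
  shows "set_inv (a <# H) = H #> inv a"
proof
  show "set_inv (a <# H) \<subseteq> H #> inv a"
  proof
    fix x assume "x \<in> set_inv (a <# H)"
    then obtain u where u: "u \<in> a <# H" "x = inv u" unfolding SET_INV_def by blast
    from u(1) obtain h where h0: "h \<in> H" "u = a \<otimes> h" unfolding l_coset_def by blast
    have h: "h \<in> H" "x = inv (a \<otimes> h)" using h0 u(2) by blast+
    have hc: "h \<in> carrier G" using subgroup.mem_carrier[OF H h(1)] .
    have "x = inv h \<otimes> inv a" using h(2) inv_mult_group[OF a hc] by (rule trans)
    moreover have "inv h \<in> H" using subgroup.m_inv_closed[OF H h(1)] .
    ultimately show "x \<in> H #> inv a" by (auto simp: r_coset_def)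
  qed
  show "H #> inv a \<subseteq> set_inv (a <# H)"
  proof
    fix x assume "x \<in> H #> inv a"
    then obtain h where h: "h \<in> H" "x = h \<otimes> inv a" by (auto simp: r_coset_def)
    have hc: "h \<in> carrier G" using subgroup.mem_carrier[OF H h(1)] .
    have "inv (a \<otimes> inv h) = inv (inv h) \<otimes> inv a" using inv_mult_group[OF a inv_closed[OF hc]] .
    then have "x = inv (a \<otimes> inv h)" using h(2) inv_inv[OF hc] by simp
    moreover have "a \<otimes> inv h \<in> a <# H" using subgroup.m_inv_closed[OF H h(1)] unfolding l_coset_def by blast
    ultimately show "x \<in> set_inv (a <# H)" by (auto simp: SET_INV_def)
  qed
qed

lemma set_inv_set_inv: "S \<subseteq> carrier G \<Longrightarrow> set_inv (set_inv S) = S"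
  by (force simp: SET_INV_def)

lemma card_lcosets:
  assumes H: "subgroup H G"
  shows "card (lcosets G H) * card H = order G"
proof -
  have "bij_betw (SET_INV G) (lcosets G H) (rcosets H)"
  proof (rule bij_betw_imageI)
    show "inj_on (SET_INV G) (lcosets G H)"
      by (metis inj_onI set_inv_set_inv lcosets_sub[OF H])
    show "SET_INV G ` lcosets G H = rcosets H"
    proof
      show "SET_INV G ` lcosets G H \<subseteq> rcosets H"
        using H by (force simp: lcosets_def set_inv_lcoset RCOSETS_def)
      show "rcosets H \<subseteq> SET_INV G ` lcosets G H"
      proof
        fix R assume "R \<in> rcosets H"
        then obtain b where b: "b \<in> carrier G" "R = H #> b" by (auto simp: RCOSETS_def)
        then have "R = set_inv (inv b <# H)" using H by (simp add: set_inv_lcoset)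
        then show "R \<in> SET_INV G ` lcosets G H" using H b lcosetsI by blast
      qed
    qed
  qed
  then have "card (lcosets G H) = card (rcosets H)" by (rule bij_betw_same_card)
  then show ?thesis using lagrange[OF H] by simp
qed

lemma lcos_inv_cancel: "C \<subseteq> carrier G \<Longrightarrow> k \<in> carrier G \<Longrightarrow> inv k <# (k <# C) = C"
  by (simp add: lcos_m_assoc lcos_mult_one)

lemma lcos_inv_cancel2: "C \<subseteq> carrier G \<Longrightarrow> k \<in> carrier G \<Longrightarrow> k <# (inv k <# C) = C"
  by (simp add: lcos_m_assoc lcos_mult_one)

lemma coset_action:
  assumes P: "subgroup P G" and K: "subgroup K G"
  shows "group_action (G\<lparr>carrier := K\<rparr>) (lcosets G P) (\<lambda>k. restrict (\<lambda>C. k <# C) (lcosets G P))"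
proof -
  let ?E = "lcosets G P"
  let ?\<phi> = "\<lambda>k. restrict (\<lambda>C. k <# C) (lcosets G P)"
  have Kc: "\<And>k. k \<in> K \<Longrightarrow> k \<in> carrier G" using subgroup.mem_carrier[OF K] .
  have bij: "?\<phi> k \<in> Bij ?E" if k: "k \<in> K" for k
  proof -
    have "bij_betw (?\<phi> k) ?E ?E"
    proof (rule bij_betw_imageI)
      show "inj_on (?\<phi> k) ?E"
        by (rule inj_onI) (metis restrict_apply' lcos_inv_cancel lcosets_sub[OF P] Kc[OF k])
      show "?\<phi> k ` ?E = ?E"
      proof
        show "?\<phi> k ` ?E \<subseteq> ?E" using lcosets_mult[OF P] Kc[OF k] by auto
        show "?E \<subseteq> ?\<phi> k ` ?E"
        proof
          fix C assume C: "C \<in> ?E"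
          have "inv k <# C \<in> ?E" using lcosets_mult[OF P C] Kc[OF k] by simp
          moreover have "C = ?\<phi> k (inv k <# C)"
            using calculation lcos_inv_cancel2 lcosets_sub[OF P C] Kc[OF k] by simp
          ultimately show "C \<in> ?\<phi> k ` ?E" by blast
        qed
      qed
    qed
    then show ?thesis by (simp add: Bij_def)
  qed
  have hom: "?\<phi> \<in> hom (G\<lparr>carrier := K\<rparr>) (BijGroup ?E)"
  proof (rule homI)
    show "?\<phi> x \<in> carrier (BijGroup ?E)" if "x \<in> carrier (G\<lparr>carrier := K\<rparr>)" for x
      using bij that by (simp add: BijGroup_def)
    show "?\<phi> (x \<otimes>\<^bsub>G\<lparr>carrier := K\<rparr>\<^esub> y) = ?\<phi> x \<otimes>\<^bsub>BijGroup ?E\<^esub> ?\<phi> y"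
      if "x \<in> carrier (G\<lparr>carrier := K\<rparr>)" "y \<in> carrier (G\<lparr>carrier := K\<rparr>)" for x y
    proof -
      have x: "x \<in> K" and y: "y \<in> K" using that by auto
      have "?\<phi> x \<otimes>\<^bsub>BijGroup ?E\<^esub> ?\<phi> y = compose ?E (?\<phi> x) (?\<phi> y)"
        using bij[OF x] bij[OF y] by (simp add: BijGroup_def)
      also have "\<dots> = ?\<phi> (x \<otimes> y)"
        by (rule ext) (auto simp: compose_def lcosets_mult[OF P] Kc x y lcos_m_assoc lcosets_sub[OF P])
      finally show ?thesis by simp
    qed
  qed
  show ?thesis
    unfolding group_action_def group_hom_def group_hom_axioms_def
    using hom group_BijGroup subgroup_imp_group[OF K] by blast
qed

lemma fixed_coset:
  assumes fin: "finite (carrier G)" and p: "prime p"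
    and P: "subgroup P G" and cardP: "card P = p ^ multiplicity p (order G)"
    and K: "subgroup K G" and cardK: "card K = p ^ j"
  shows "\<exists>C0\<in>lcosets G P. \<forall>k\<in>K. k <# C0 = C0"
proof (rule ccontr)
  assume nofix: "\<not> ?thesis"
  let ?E = "lcosets G P"
  let ?\<phi> = "\<lambda>k. restrict (\<lambda>C. k <# C) (lcosets G P)"
  let ?K = "G\<lparr>carrier := K\<rparr>"
  interpret A: group_action ?K ?E ?\<phi> by (rule coset_action[OF P K])
  have finE: "finite ?E"
    using fin by (simp add: lcosets_def)
  have pdvd: "p dvd card (orbit ?K ?\<phi> C)" if C: "C \<in> ?E" for C
  proof -
    have "card (orbit ?K ?\<phi> C) * card (stabilizer ?K ?\<phi> C) = p ^ j"
      using A.orbit_stabilizer_theorem[OF C] cardK by (simp add: order_def)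
    then have "card (orbit ?K ?\<phi> C) dvd p ^ j" by (metis dvd_triv_left)
    then obtain i where i: "card (orbit ?K ?\<phi> C) = p ^ i" using divides_primepow_nat[OF p] by blast
    have "i \<noteq> 0"
    proof
      assume "i = 0"
      then have c1: "card (orbit ?K ?\<phi> C) = 1" using i by simp
      have Cin: "C \<in> orbit ?K ?\<phi> C" by (rule A.orbit_refl[OF C])
      have "orbit ?K ?\<phi> C = {C}" using c1 Cin by (metis card_1_singletonE singletonD)
      then have "\<forall>k\<in>K. k <# C = C" using C by (auto simp: orbit_def)
      then show False using nofix C by blast
    qed
    then show ?thesis using i by (simp add: dvd_power)
  qed
  have "(\<Sum>orb\<in>orbits ?K ?E ?\<phi>. \<Sum>x\<in>orb. (1::nat)) = (\<Sum>x\<in>?E. 1)"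
    by (rule A.disjoint_sum[OF finE])
  then have sumeq: "(\<Sum>orb\<in>orbits ?K ?E ?\<phi>. card orb) = card ?E" by simp
  have "p dvd (\<Sum>orb\<in>orbits ?K ?E ?\<phi>. card orb)"
    by (rule dvd_sum) (auto simp: orbits_def pdvd)
  then have "p dvd card ?E" using sumeq by simp
  then have "p * p ^ multiplicity p (order G) dvd card ?E * card P"
    using cardP by (simp add: mult_dvd_mono)
  then have "p ^ Suc (multiplicity p (order G)) dvd order G"
    using card_lcosets[OF P] by simp
  moreover have "order G \<noteq> 0" using fin order_gt_0_iff_finite by auto
  ultimately have "Suc (multiplicity p (order G)) \<le> multiplicity p (order G)"
    using power_dvd_iff_le_multiplicity p by (metis not_prime_unit)
  then show False by simp
qed

lemma sub_card_dvd:
  assumes I: "subgroup I G" and J: "subgroup J G" and IJ: "I \<subseteq> J"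
  shows "card I dvd card J"
proof -
  have "card (rcosets\<^bsub>G\<lparr>carrier := J\<rparr>\<^esub> I) * card I = order (G\<lparr>carrier := J\<rparr>)"
    by (rule group.lagrange[OF subgroup_imp_group[OF J] subgroup_incl[OF I J IJ]])
  then show ?thesis by (metis dvd_triv_right order_def partial_object.select_convs(1) partial_object.surjective partial_object.update_convs(1))
qed

lemma conj_eq_image:
  assumes "c \<in> carrier G"
  shows "c <# y #> inv c = (\<lambda>x. c \<otimes> x \<otimes> inv c) ` y"
  by (auto simp: l_coset_def r_coset_def)

lemma conj_subgroup_card:
  assumes c: "c \<in> carrier G" and y: "subgroup y G"
  shows "subgroup (c <# y #> inv c) G" "card (c <# y #> inv c) = card y"
proof -
  show "subgroup (c <# y #> inv c) G"
    using subgroup_conjugation_is_surj1[of "inv c" y] c y by simp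
  have "inj_on (\<lambda>x. c \<otimes> x \<otimes> inv c) y"
    by (rule inj_onI) (use c conjugation_is_inj subgroup.mem_carrier[OF y] in blast)
  then show "card (c <# y #> inv c) = card y"
    by (simp add: conj_eq_image[OF c] card_image)
qed

lemma gmap_pgroup:
  assumes p: "prime p" and z: "subgroup z G" and y: "subgroup y G"
    and psi: "G_map G z y \<psi>" and cy: "card y = p ^ k"
  shows "\<exists>j. card z = p ^ j"
proof -
  have zin: "z \<in> lcosets G z"
    using lcosetsI[OF z one_closed] lcos_mult_one[OF subgroup.subset[OF z]] by simp
  then have "\<psi> z \<in> lcosets G y" using psi by (auto simp: G_map_def)
  then obtain c where c: "c \<in> carrier G" "\<psi> z = c <# y" by (rule lcosetsE)
  have "z \<subseteq> c <# y #> inv c"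
  proof
    fix h assume h: "h \<in> z"
    have hc: "h \<in> carrier G" using subgroup.mem_carrier[OF z h] .
    have hz: "h <# z = z" using coset_join3[OF hc z h] .
    have eqm: "\<psi> (h <# z) = h <# \<psi> z" using psi hc zin unfolding G_map_def by blast
    have "c <# y = h <# (c <# y)"
      using eqm hz c(2) by simp
    also have "\<dots> = (h \<otimes> c) <# y" using lcos_m_assoc subgroup.subset[OF y] hc c by simp
    finally have eq: "c <# y = (h \<otimes> c) <# y" .
    have "h \<otimes> c \<in> (h \<otimes> c) <# y"
      using subgroup.one_closed[OF y] hc c by (force simp: l_coset_def)
    then have "h \<otimes> c \<in> c <# y" using eq by simp
    then obtain y0 where y0: "y0 \<in> y" "h \<otimes> c = c \<otimes> y0" by (auto simp: l_coset_def)
    have y0c: "y0 \<in> carrier G" using subgroup.mem_carrier[OF y y0(1)] .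
    have "h = c \<otimes> y0 \<otimes> inv c"
      using y0(2) hc c y0c by (metis inv_solve_right m_closed)
    then show "h \<in> c <# y #> inv c" using y0(1) conj_eq_image[OF c(1)] by blast
  qed
  then have "card z dvd card y"
    using sub_card_dvd[OF z conj_subgroup_card(1)[OF c(1) y]] conj_subgroup_card(2)[OF c(1) y] by simp
  then show ?thesis using cy divides_primepow_nat[OF p] by auto
qed

end

definition constm :: "('a, 'b) monoid_scheme \<Rightarrow> 'a set \<Rightarrow> 'a orb_mor" where
  "constm G K = (K, carrier G, restrict (\<lambda>_. carrier G) (lcosets G K))"

definition S0 :: "('a, 'b) monoid_scheme \<Rightarrow> nat \<Rightarrow> 'a orb_mor set" where
  "S0 G p = constm G ` {K. p_subgroup G p K}"

lemma orbit_cat_on_simps: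
  "Ob (orbit_cat_on G Obs) = Obs"
  "Hom (orbit_cat_on G Obs) H K = {(H, K, f) | f. G_map G H K f}"
  "Comp (orbit_cat_on G Obs) (K', L, g) (H, K, f) = (H, L, restrict (g \<circ> f) (lcosets G H))"
  "Idm (orbit_cat_on G Obs) H = (H, H, restrict id (lcosets G H))"
  by (simp_all add: orbit_cat_on_def)

lemma Comp_const:
  assumes gm: "G_map G a b f"
  shows "Comp (orbit_cat_on G Obs) (constm G b) (a, b, f) = constm G a"
proof -
  have "restrict (restrict (\<lambda>_. carrier G) (lcosets G b) \<circ> f) (lcosets G a)
        = restrict (\<lambda>_. carrier G) (lcosets G a)"
  proof (rule ext)
    fix C
    show "restrict (restrict (\<lambda>_. carrier G) (lcosets G b) \<circ> f) (lcosets G a) C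
        = restrict (\<lambda>_. carrier G) (lcosets G a) C"
    proof (cases "C \<in> lcosets G a")
      case True
      then have "f C \<in> lcosets G b" using gm unfolding G_map_def by blast
      then show ?thesis using True by simp
    qed simp
  qed
  then show ?thesis unfolding constm_def by (simp add: orbit_cat_on_simps)
qed

lemma G_map_id:
  assumes "group G" "subgroup a G"
  shows "G_map G a a (restrict id (lcosets G a))"
  unfolding G_map_def
proof (intro conjI ballI)
  show "restrict id (lcosets G a) \<in> extensional (lcosets G a)" by simp
  fix C assume C: "C \<in> lcosets G a"
  then show "restrict id (lcosets G a) C \<in> lcosets G a" by simp
  fix g assume g: "g \<in> carrier G"
  have "g <#\<^bsub>G\<^esub> C \<in> lcosets G a" using group.lcosets_mult[OF assms C g] .
  then show "restrict id (lcosets G a) (g <#\<^bsub>G\<^esub> C) = g <#\<^bsub>G\<^esub> restrict id (lcosets G a) C"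
    using C by simp
qed

lemma G_map_comp:
  assumes G: "group G" and a: "subgroup a G" and f: "G_map G a b f" and g: "G_map G b c g"
  shows "G_map G a c (restrict (g \<circ> f) (lcosets G a))"
  unfolding G_map_def
proof (intro conjI ballI)
  show "restrict (g \<circ> f) (lcosets G a) \<in> extensional (lcosets G a)" by simp
  fix C assume C: "C \<in> lcosets G a"
  have fC: "f C \<in> lcosets G b" using f C unfolding G_map_def by blast
  then show "restrict (g \<circ> f) (lcosets G a) C \<in> lcosets G c"
    using g C unfolding G_map_def by simp
  fix x assume x: "x \<in> carrier G"
  have xC: "x <#\<^bsub>G\<^esub> C \<in> lcosets G a" using group.lcosets_mult[OF G a C x] .
  have "f (x <#\<^bsub>G\<^esub> C) = x <#\<^bsub>G\<^esub> f C" using f x C unfolding G_map_def by blast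
  moreover have "g (x <#\<^bsub>G\<^esub> f C) = x <#\<^bsub>G\<^esub> g (f C)" using g x fC unfolding G_map_def by blast
  ultimately show "restrict (g \<circ> f) (lcosets G a) (x <#\<^bsub>G\<^esub> C) = x <#\<^bsub>G\<^esub> restrict (g \<circ> f) (lcosets G a) C"
    using xC C by simp
qed

lemma const_Hom:
  assumes "group G" "subgroup K G"
  shows "constm G K \<in> Hom (orbit_cat_on G Obs) K (carrier G)"
proof -
  interpret group G by fact
  show ?thesis
    using lcosets_carrier lcosets_mult[OF assms(2)]
    by (auto simp: orbit_cat_on_simps constm_def G_map_def lcos_mult_one coset_join3[OF _ subgroup_self])
qed

lemma Hom_const:
  assumes "group G" "f \<in> Hom (orbit_cat_on G Obs) K (carrier G)"
  shows "f = constm G K"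
proof -
  interpret group G by fact
  obtain h where f: "f = (K, carrier G, h)" "G_map G K (carrier G) h"
    using assms(2) by (auto simp: orbit_cat_on_simps)
  have "h = restrict (\<lambda>_. carrier G) (lcosets G K)"
  proof (rule ext)
    fix C show "h C = restrict (\<lambda>_. carrier G) (lcosets G K) C"
      using f(2) lcosets_carrier unfolding G_map_def by (cases "C \<in> lcosets G K") (auto simp: extensional_def)
  qed
  then show ?thesis using f by (simp add: constm_def)
qed

lemma S0_sieve:
  assumes G: "group G" and fin: "finite (carrier G)" and p: "prime p"
  shows "sieve (orbit_cat G) (carrier G) (S0 G p)"
  unfolding sieve_def
proof (intro conjI ballI impI)
  interpret group G by fact
  show "S0 G p \<subseteq> (\<Union>y\<in>Ob (orbit_cat G). Hom (orbit_cat G) y (carrier G))"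
    using const_Hom[OF G] by (force simp: S0_def orbit_cat_def orbit_cat_on_simps p_subgroup_def)
  fix y z f \<phi>
  assume y: "y \<in> Ob (orbit_cat G)" and z: "z \<in> Ob (orbit_cat G)"
    and f: "f \<in> Hom (orbit_cat G) y (carrier G)" and \<phi>: "\<phi> \<in> Hom (orbit_cat G) z y"
    and fS: "f \<in> S0 G p"
  obtain K where K: "p_subgroup G p K" "f = constm G K" using fS by (auto simp: S0_def)
  have "f = constm G y" using Hom_const[OF G] f by (simp add: orbit_cat_def)
  then have Ky: "K = y" using K by (simp add: constm_def)
  obtain \<psi> where \<psi>: "\<phi> = (z, y, \<psi>)" "G_map G z y \<psi>" using \<phi> by (auto simp: orbit_cat_def orbit_cat_on_simps)
  have "Comp (orbit_cat G) f \<phi> = constm G z"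
    using Comp_const[OF \<psi>(2)] \<psi>(1) K Ky by (simp add: orbit_cat_def)
  moreover have "p_subgroup G p z"
    using gmap_pgroup[OF p _ _ \<psi>(2)] K Ky z by (auto simp: p_subgroup_def orbit_cat_def orbit_cat_on_simps)
  ultimately show "Comp (orbit_cat G) f \<phi> \<in> S0 G p" by (simp add: S0_def)
qed

lemma orb_proj_const:
  assumes "group G" "subgroup P G"
  shows "orb_proj G P (carrier G) = constm G P"
  using group.lcoset_setmult_carrier[OF assms] unfolding orb_proj_def constm_def
  by (auto simp: restrict_def intro!: ext)

lemma sylow_exists:
  assumes G: "group G" and fin: "finite (carrier G)" and p: "prime p"
  shows "\<exists>P. sylow_subgroup_of G p (carrier G) P"
proof -
  let ?a = "multiplicity p (order G)"
  have "p ^ ?a dvd order G" by (rule multiplicity_dvd)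
  then obtain m where "order G = p ^ ?a * m" by blast
  then obtain P where "subgroup P G" "card P = p ^ ?a" using sylow_thm[OF p G _ fin] by blast
  then show ?thesis unfolding sylow_subgroup_of_def order_def using subgroup.subset[of P G] by blast
qed

lemma S0_covering:
  assumes G: "group G" and fin: "finite (carrier G)" and p: "prime p"
  shows "sipp_covering G p (carrier G) (S0 G p)"
proof -
  obtain P where P: "sylow_subgroup_of G p (carrier G) P" using sylow_exists[OF assms] by blast
  then have "p_subgroup G p P" by (auto simp: sylow_subgroup_of_def p_subgroup_def)
  then have "orb_proj G P (carrier G) \<in> S0 G p"
    using orb_proj_const[OF G] by (auto simp: S0_def p_subgroup_def)
  then show ?thesis using S0_sieve[OF assms] P by (auto simp: sipp_covering_def)
qed

lemma (in group) S0_min: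
  assumes fin: "finite (carrier G)" and p: "prime p"
    and S': "sipp_covering G p (carrier G) S'"
  shows "S0 G p \<subseteq> S'"
proof
  note G = is_group
  fix x assume "x \<in> S0 G p"
  then obtain K j where K: "subgroup K G" "card K = p ^ j" "x = constm G K"
    by (auto simp: S0_def p_subgroup_def)
  obtain P where P: "sylow_subgroup_of G p (carrier G) P" "orb_proj G P (carrier G) \<in> S'"
    and sv: "sieve (orbit_cat G) (carrier G) S'"
    using S' by (auto simp: sipp_covering_def)
  have Ps: "subgroup P G" and cP: "card P = p ^ multiplicity p (order G)"
    using P(1) by (auto simp: sylow_subgroup_of_def order_def)
  obtain C0 where C0: "C0 \<in> lcosets G P" "\<forall>k\<in>K. k <# C0 = C0"
    using fixed_coset[OF fin p Ps cP K(1,2)] by blast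
  have KC0: "K <#> C0 = C0"
  proof
    show "K <#> C0 \<subseteq> C0"
    proof
      fix u assume "u \<in> K <#> C0"
      then obtain k v where kv: "k \<in> K" "v \<in> C0" "u = k \<otimes> v" by (auto simp: set_mult_def)
      then have "u \<in> k <# C0" by (auto simp: l_coset_def)
      then show "u \<in> C0" using C0(2) kv(1) by simp
    qed
    show "C0 \<subseteq> K <#> C0"
    proof
      fix v assume v: "v \<in> C0"
      have "v \<in> carrier G" using v lcosets_sub[OF Ps C0(1)] by blast
      then have "v = \<one> \<otimes> v" by simp
      then show "v \<in> K <#> C0" using v subgroup.one_closed[OF K(1)] by (auto simp: set_mult_def)
    qed
  qed
  define \<psi> where "\<psi> = restrict (\<lambda>C. C <#> C0) (lcosets G K)"
  have C0sub: "C0 \<subseteq> carrier G" using lcosets_sub[OF Ps C0(1)] .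
  have Ksub: "K \<subseteq> carrier G" using subgroup.subset[OF K(1)] .
  have gm: "G_map G K P \<psi>"
    unfolding G_map_def
  proof (intro conjI ballI)
    show "\<psi> \<in> extensional (lcosets G K)" by (simp add: \<psi>_def)
    fix C assume C: "C \<in> lcosets G K"
    then obtain a where a: "a \<in> carrier G" "C = a <# K" by (rule lcosetsE)
    have eq: "\<psi> C = a <# C0" using C a KC0 by (simp add: \<psi>_def setmult_lcos_assoc Ksub C0sub)
    show "\<psi> C \<in> lcosets G P" using eq lcosets_mult[OF Ps C0(1) a(1)] by simp
    fix g assume g: "g \<in> carrier G"
    have "g <# C \<in> lcosets G K" using lcosets_mult[OF K(1) C g] .
    then have "\<psi> (g <# C) = (g <# C) <#> C0" by (simp add: \<psi>_def)
    also have "\<dots> = g <# (C <#> C0)" using setmult_lcos_assoc lcosets_sub[OF K(1) C] C0sub g by simp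
    finally show "\<psi> (g <# C) = g <# \<psi> C" using C by (simp add: \<psi>_def)
  qed
  have fH: "orb_proj G P (carrier G) \<in> Hom (orbit_cat G) P (carrier G)"
    using const_Hom[OF G Ps] orb_proj_const[OF G Ps] by (simp add: orbit_cat_def)
  have phH: "(K, P, \<psi>) \<in> Hom (orbit_cat G) K P"
    using gm by (simp add: orbit_cat_def orbit_cat_on_simps)
  have "Comp (orbit_cat G) (orb_proj G P (carrier G)) (K, P, \<psi>) \<in> S'"
    using sv fH phH P(2) Ps K(1) unfolding sieve_def by (auto simp: orbit_cat_def orbit_cat_on_simps)
  moreover have "Comp (orbit_cat G) (orb_proj G P (carrier G)) (K, P, \<psi>) = constm G K"
    using Comp_const[OF gm] orb_proj_const[OF G Ps] by (simp add: orbit_cat_def)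
  ultimately show "x \<in> S'" using K(3) by simp
qed

lemma min_sieve_eq:
  assumes G: "group G" and fin: "finite (carrier G)" and p: "prime p"
  shows "min_sipp_sieve G p (carrier G) = S0 G p"
  unfolding min_sipp_sieve_def
proof (rule the_equality)
  show "sipp_covering G p (carrier G) (S0 G p) \<and> (\<forall>S'. sipp_covering G p (carrier G) S' \<longrightarrow> S0 G p \<subseteq> S')"
    using S0_covering[OF assms] group.S0_min[OF assms] by blast
  fix S assume "sipp_covering G p (carrier G) S \<and> (\<forall>S'. sipp_covering G p (carrier G) S' \<longrightarrow> S \<subseteq> S')"
  then show "S = S0 G p" using S0_covering[OF assms] group.S0_min[OF assms] by blast
qed

lemma T0_eq:
  assumes G: "group G" and a: "p_subgroup G p a"
  shows "sieve_psh0 (orbit_cat G) (carrier G) (S0 G p) a = {constm G a}"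
proof
  show "sieve_psh0 (orbit_cat G) (carrier G) (S0 G p) a \<subseteq> {constm G a}"
    using Hom_const[OF G] by (auto simp: sieve_psh0_def orbit_cat_def)
  have "constm G a \<in> S0 G p" using a by (simp add: S0_def)
  moreover have "constm G a \<in> Hom (orbit_cat G) a (carrier G)"
    using const_Hom[OF G] a by (simp add: p_subgroup_def orbit_cat_def)
  ultimately show "{constm G a} \<subseteq> sieve_psh0 (orbit_cat G) (carrier G) (S0 G p) a"
    by (simp add: sieve_psh0_def)
qed

lemma T1_const:
  assumes "G_map G a b f"
  shows "sieve_psh1 (orbit_cat G) (a, b, f) (constm G b) = constm G a"
  using Comp_const[OF assms] by (simp add: sieve_psh1_def orbit_cat_def)

lemma terminal_gen:
  assumes G: "group G" and Obs: "Obs \<subseteq> {K. p_subgroup G p K}"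
  shows "psh_terminal TYPE('x) (orbit_cat_on G Obs)
           (sieve_psh0 (orbit_cat G) (carrier G) (S0 G p)) (sieve_psh1 (orbit_cat G))"
proof -
  let ?C = "orbit_cat_on G Obs"
  let ?T0 = "sieve_psh0 (orbit_cat G) (carrier G) (S0 G p)"
  let ?T1 = "sieve_psh1 (orbit_cat G)"
  have T0a: "\<And>a. a \<in> Ob ?C \<Longrightarrow> ?T0 a = {constm G a}"
    using T0_eq[OF G] Obs by (auto simp: orbit_cat_on_simps)
  have subg: "\<And>a. a \<in> Ob ?C \<Longrightarrow> subgroup a G"
    using Obs by (auto simp: orbit_cat_on_simps p_subgroup_def)
  have homE: "\<And>f a b. f \<in> Hom ?C a b \<Longrightarrow> \<exists>f'. f = (a, b, f') \<and> G_map G a b f'"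
    by (auto simp: orbit_cat_on_simps)
  have T1f: "?T1 f (constm G b) = constm G a" if "f \<in> Hom ?C a b" for f a b
    using homE[OF that] T1_const by auto
  have psh: "presheaf ?C ?T0 ?T1"
    unfolding presheaf_def
  proof (intro conjI ballI)
    fix a b f assume a: "a \<in> Ob ?C" and b: "b \<in> Ob ?C" and f: "f \<in> Hom ?C a b"
    show "?T1 f \<in> ?T0 b \<rightarrow> ?T0 a"
      using T0a[OF a] T0a[OF b] T1f[OF f] by auto
  next
    fix a x assume a: "a \<in> Ob ?C" and x: "x \<in> ?T0 a"
    have "Idm ?C a \<in> Hom ?C a a"
      using G_map_id[OF G subg[OF a]] by (simp add: orbit_cat_on_simps)
    then show "?T1 (Idm ?C a) x = x"
      using T1f x T0a[OF a] by auto
  next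
    fix a b c f g x assume a: "a \<in> Ob ?C" and b: "b \<in> Ob ?C" and c: "c \<in> Ob ?C"
      and f: "f \<in> Hom ?C a b" and g: "g \<in> Hom ?C b c" and x: "x \<in> ?T0 c"
    obtain f' where f': "f = (a, b, f')" "G_map G a b f'" using homE[OF f] by blast
    obtain g' where g': "g = (b, c, g')" "G_map G b c g'" using homE[OF g] by blast
    have "Comp ?C g f = (a, c, restrict (g' \<circ> f') (lcosets G a))"
      using f'(1) g'(1) by (simp add: orbit_cat_on_simps)
    moreover have "G_map G a c (restrict (g' \<circ> f') (lcosets G a))"
      by (rule G_map_comp[OF G subg[OF a] f'(2) g'(2)])
    ultimately have "Comp ?C g f \<in> Hom ?C a c" by (simp add: orbit_cat_on_simps)
    then have "?T1 (Comp ?C g f) x = constm G a" using T1f x T0a[OF c] by auto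
    moreover have "?T1 f (?T1 g x) = constm G a" using T1f[OF g] T1f[OF f] x T0a[OF c] by auto
    ultimately show "?T1 (Comp ?C g f) x = ?T1 f (?T1 g x)" by simp
  qed
  show ?thesis
    unfolding psh_terminal_def
  proof (intro conjI allI impI)
    show "presheaf ?C ?T0 ?T1" by (rule psh)
    fix X0 :: "'a set \<Rightarrow> 'x set" and X1
    assume X: "presheaf ?C X0 X1"
    have "nat_trans ?C X0 X1 ?T0 ?T1 (\<lambda>a x. constm G a)"
      unfolding nat_trans_def
    proof (intro conjI ballI)
      fix a assume a: "a \<in> Ob ?C"
      show "(\<lambda>x. constm G a) \<in> X0 a \<rightarrow> ?T0 a" using T0a[OF a] by auto
    next
      fix a b f x assume a: "a \<in> Ob ?C" and b: "b \<in> Ob ?C" and f: "f \<in> Hom ?C a b" and x: "x \<in> X0 b"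
      show "constm G a = ?T1 f (constm G b)" using T1f[OF f] by simp
    qed
    then show "\<exists>\<eta>. nat_trans ?C X0 X1 ?T0 ?T1 \<eta>" by blast
    show "\<forall>a\<in>Ob ?C. \<forall>x\<in>X0 a. \<eta> a x = \<eta>' a x"
      if "nat_trans ?C X0 X1 ?T0 ?T1 \<eta> \<and> nat_trans ?C X0 X1 ?T0 ?T1 \<eta>'" for \<eta> \<eta>'
    proof (intro ballI)
      fix a x assume a: "a \<in> Ob ?C" and x: "x \<in> X0 a"
      have "\<eta> a x \<in> ?T0 a" "\<eta>' a x \<in> ?T0 a"
        using that a x unfolding nat_trans_def by (blast intro: funcset_mem)+
      then show "\<eta> a x = \<eta>' a x" using T0a[OF a] by simp
    qed
  qed
qed

theorem lemma4p4p1: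
  fixes G :: "('a, 'b) monoid_scheme" and p :: nat
  assumes "group G" and "finite (carrier G)" and "prime p" and "p dvd order G"
  shows "psh_terminal TYPE('x) (orbit_cat_p G p)
           (sieve_psh0 (orbit_cat G) (carrier G) (min_sipp_sieve G p (carrier G)))
           (sieve_psh1 (orbit_cat G))
       \<and> psh_terminal TYPE('x) (orbit_cat_p_circ G p)
           (sieve_psh0 (orbit_cat G) (carrier G) (min_sipp_sieve G p (carrier G)))
           (sieve_psh1 (orbit_cat G))"
proof -
  have eq: "min_sipp_sieve G p (carrier G) = S0 G p"
    by (rule min_sieve_eq[OF assms(1-3)])
  show ?thesis
    unfolding eq orbit_cat_p_def orbit_cat_p_circ_def
    using terminal_gen[OF assms(1), of "{Q. p_subgroup G p Q}" p]
          terminal_gen[OF assms(1), of "{Q. p_subgroup G p Q \<and> Q \<noteq> {\<one>\<^bsub>G\<^esub>}}" p]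
    by auto
qed

end
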